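(* Let $\nu$ be a Borel probability measure on $\mathbb{R}$ with characteristic function $\hat\nu$, and suppose there are constants $b_n>0$, $c_n\in\mathbb{R}$, $m\in\mathbb{R}$ and $\sigma>0$ such that $\lim_{n\to\infty}e^{itc_n}[\hat\nu(b_nt)]^n=e^{itm-\frac12\sigma^2t^2}$ for all $t\in\mathbb{R}$. If $b_n\ge\frac{1}{\sqrt n}$ for all $n$, then $\int_{-\infty}^\infty\lambda^2\,\nu(d\lambda)<\infty$. *)

theory Defs
  imports "HOL-Probability.Probability"
begin

end

theory Submission
  imports Defs
begin


lemma prod_int:
  fixes f g :: "real \<Rightarrow> real"
  assumes M: "prob_space M" and N: "prob_space N"
    and fm[measurable]: "f \<in> borel_measurable M" and gm[measurable]: "g \<in> borel_measurable N"
    and fb: "\<And>x. \<bar>f x\<bar> \<le> 1" and gb: "\<And>x. \<bar>g x\<bar> \<le> 1"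
  shows "(\<integral>p. f (fst p) * g (snd p) \<partial>(M \<Otimes>\<^sub>M N)) = (\<integral>x. f x \<partial>M) * (\<integral>y. g y \<partial>N)"
proof -
  interpret P: pair_prob_space M N using M N by (simp add: pair_prob_space.intro pair_sigma_finite_def prob_space_imp_sigma_finite)
  have int: "integrable (M \<Otimes>\<^sub>M N) (\<lambda>(x,y). f x * g y)"
  proof (rule P.integrable_const_bound[where B=1])
    show "AE x in M \<Otimes>\<^sub>M N. norm (case x of (x, y) \<Rightarrow> f x * g y) \<le> 1"
      by (intro AE_I2) (auto simp: abs_mult intro!: mult_le_one fb gb)
  qed simp
  have "(\<integral>p. f (fst p) * g (snd p) \<partial>(M \<Otimes>\<^sub>M N)) = (\<integral>(x,y). f x * g y \<partial>(M \<Otimes>\<^sub>M N))"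
    by (intro Bochner_Integration.integral_cong) auto
  also have "\<dots> = (\<integral>x. (\<integral>y. f x * g y \<partial>N) \<partial>M)"
    using P.integral_fst[OF int] by simp
  also have "\<dots> = (\<integral>x. f x * (\<integral>y. g y \<partial>N) \<partial>M)" by simp
  also have "\<dots> = (\<integral>x. f x \<partial>M) * (\<integral>y. g y \<partial>N)" by simp
  finally show ?thesis .
qed


lemma iexp_int:
  assumes "prob_space M" "f \<in> borel_measurable M"
  shows "complex_integrable M (\<lambda>x. iexp (f x))"
proof -
  interpret prob_space M by fact
  show ?thesis using assms(2) by (intro integrable_const_bound[where B=1]) (auto intro!: AE_I2)
qed

lemma rd_meas:
  assumes "real_distribution M" "f \<in> measurable borel N"
  shows "f \<in> measurable M N"
proof -
  interpret real_distribution M by fact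
  show ?thesis using assms(2) measurable_cong_sets[of M borel N N] by simp
qed

lemma rd_meas2:
  assumes "real_distribution M" "f \<in> measurable (borel \<Otimes>\<^sub>M borel) N"
  shows "f \<in> measurable (M \<Otimes>\<^sub>M M) N"
proof -
  interpret real_distribution M by fact
  have sp: "sets (M \<Otimes>\<^sub>M M) = sets (borel \<Otimes>\<^sub>M borel)"
    by (rule sets_pair_measure_cong) simp_all
  show ?thesis using assms(2) measurable_cong_sets[OF sp refl] by simp
qed

lemma char_Re:
  assumes "real_distribution M"
  shows "Re (char M a) = (\<integral>x. cos (a * x) \<partial>M)" "Im (char M a) = (\<integral>x. sin (a * x) \<partial>M)"
proof -
  have m: "(\<lambda>x. a * x) \<in> borel_measurable M" by (rule rd_meas[OF assms]) simp
  have "Re (char M a) = (\<integral>x. Re (iexp (a*x)) \<partial>M)" unfolding char_def by (rule integral_Re[symmetric], rule iexp_int) (use assms m in \<open>auto simp: real_distribution_def\<close>)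
  then show "Re (char M a) = (\<integral>x. cos (a * x) \<partial>M)" by (simp add: Re_exp)
  have "Im (char M a) = (\<integral>x. Im (iexp (a*x)) \<partial>M)" unfolding char_def by (rule integral_Im[symmetric], rule iexp_int) (use assms m in \<open>auto simp: real_distribution_def\<close>)
  then show "Im (char M a) = (\<integral>x. sin (a * x) \<partial>M)" by (simp add: Im_exp)
qed

lemma cos_sin_diff:
  assumes nu: "real_distribution \<nu>"
  shows "(\<integral>p. cos (a * (fst p - snd p)) \<partial>(\<nu> \<Otimes>\<^sub>M \<nu>)) = (cmod (char \<nu> a))\<^sup>2"
    "(\<integral>p. sin (a * (fst p - snd p)) \<partial>(\<nu> \<Otimes>\<^sub>M \<nu>)) = 0"
proof -
  interpret real_distribution \<nu> by fact
  have P: "prob_space (\<nu> \<Otimes>\<^sub>M \<nu>)" by (simp add: prob_space_axioms prob_space_pair)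
  interpret P: prob_space "\<nu> \<Otimes>\<^sub>M \<nu>" by (rule P)
  have ps: "prob_space \<nu>" by (rule prob_space_axioms)
  have i1: "integrable (\<nu> \<Otimes>\<^sub>M \<nu>) (\<lambda>p. h1 (a * fst p) * h2 (a * snd p))"
    if "h1 \<in> {sin, cos}" "h2 \<in> {sin, cos}" for h1 h2
    using that
    by (auto intro!: P.integrable_const_bound[where B=1] AE_I2 simp: abs_mult mult_le_one)
  have eq: "(\<integral>p. h1 (a * fst p) * h2 (a * snd p) \<partial>(\<nu> \<Otimes>\<^sub>M \<nu>)) = (\<integral>x. h1 (a * x) \<partial>\<nu>) * (\<integral>x. h2 (a * x) \<partial>\<nu>)"
    if "h1 \<in> {sin, cos}" "h2 \<in> {sin, cos}" for h1 h2
    using prod_int[OF ps ps, of "\<lambda>x. h1 (a * x)" "\<lambda>x. h2 (a * x)"] that by auto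
  have "(\<integral>p. cos (a * (fst p - snd p)) \<partial>(\<nu> \<Otimes>\<^sub>M \<nu>))
      = (\<integral>p. cos (a * fst p) * cos (a * snd p) + sin (a * fst p) * sin (a * snd p) \<partial>(\<nu> \<Otimes>\<^sub>M \<nu>))"
    by (simp add: right_diff_distrib cos_diff)
  also have "\<dots> = (\<integral>x. cos (a * x) \<partial>\<nu>)\<^sup>2 + (\<integral>x. sin (a * x) \<partial>\<nu>)\<^sup>2"
    by (subst Bochner_Integration.integral_add) (auto intro!: i1 simp: eq power2_eq_square)
  also have "\<dots> = (cmod (char \<nu> a))\<^sup>2"
    using char_Re[OF nu, of a] by (simp add: cmod_power2)
  finally show "(\<integral>p. cos (a * (fst p - snd p)) \<partial>(\<nu> \<Otimes>\<^sub>M \<nu>)) = (cmod (char \<nu> a))\<^sup>2" .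
  have "(\<integral>p. sin (a * (fst p - snd p)) \<partial>(\<nu> \<Otimes>\<^sub>M \<nu>))
      = (\<integral>p. sin (a * fst p) * cos (a * snd p) - cos (a * fst p) * sin (a * snd p) \<partial>(\<nu> \<Otimes>\<^sub>M \<nu>))"
    by (simp add: right_diff_distrib sin_diff)
  also have "\<dots> = 0"
    by (subst Bochner_Integration.integral_diff) (auto intro!: i1 simp: eq)
  finally show "(\<integral>p. sin (a * (fst p - snd p)) \<partial>(\<nu> \<Otimes>\<^sub>M \<nu>)) = 0" .
qed

lemma cexp_diff:
  assumes nu: "real_distribution \<nu>"
  shows "(\<integral>p. iexp (a * (fst p - snd p)) \<partial>(\<nu> \<Otimes>\<^sub>M \<nu>)) = complex_of_real ((cmod (char \<nu> a))\<^sup>2)"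
proof -
  have m: "(\<lambda>p. a * (fst p - snd p)) \<in> borel_measurable (\<nu> \<Otimes>\<^sub>M \<nu>)" by (rule rd_meas2[OF nu]) simp
  have P: "prob_space (\<nu> \<Otimes>\<^sub>M \<nu>)" using nu by (simp add: prob_space_pair real_distribution_def)
  have "Re (\<integral>p. iexp (a * (fst p - snd p)) \<partial>(\<nu> \<Otimes>\<^sub>M \<nu>)) = (\<integral>p. Re (iexp (a * (fst p - snd p))) \<partial>(\<nu> \<Otimes>\<^sub>M \<nu>))"
    by (rule integral_Re[symmetric], rule iexp_int) (use m P in auto)
  then have "Re (\<integral>p. iexp (a * (fst p - snd p)) \<partial>(\<nu> \<Otimes>\<^sub>M \<nu>)) = (\<integral>p. cos (a * (fst p - snd p)) \<partial>(\<nu> \<Otimes>\<^sub>M \<nu>))"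
    by (simp add: Re_exp)
  moreover have "Im (\<integral>p. iexp (a * (fst p - snd p)) \<partial>(\<nu> \<Otimes>\<^sub>M \<nu>)) = (\<integral>p. Im (iexp (a * (fst p - snd p))) \<partial>(\<nu> \<Otimes>\<^sub>M \<nu>))"
    by (rule integral_Im[symmetric], rule iexp_int) (use m P in auto)
  then have "Im (\<integral>p. iexp (a * (fst p - snd p)) \<partial>(\<nu> \<Otimes>\<^sub>M \<nu>)) = (\<integral>p. sin (a * (fst p - snd p)) \<partial>(\<nu> \<Otimes>\<^sub>M \<nu>))"
    by (simp add: Im_exp)
  ultimately show ?thesis using cos_sin_diff[OF nu, of a] by (intro complex_eqI) auto
qed


lemma cos_lb: fixes u :: real assumes "\<bar>u\<bar> \<le> 1" shows "u\<^sup>2 / 4 \<le> 1 - cos u"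
proof -
  have h: "cmod (iexp u - (\<Sum>k \<le> 3. (\<i> * u)^k / fact k)) \<le> \<bar>u\<bar>^4 / fact 4"
    using iexp_approx1[of u 3] by (simp add: numeral_eq_Suc)
  have "\<bar>Re (iexp u - (\<Sum>k \<le> 3. (\<i> * u)^k / fact k))\<bar> \<le> cmod (iexp u - (\<Sum>k \<le> 3. (\<i> * u)^k / fact k))"
    by (rule abs_Re_le_cmod)
  moreover have "Re (iexp u - (\<Sum>k \<le> 3. (\<i> * u)^k / fact k)) = cos u - 1 + u\<^sup>2/2"
    by (simp add: numeral_eq_Suc Re_exp power2_eq_square fact_numeral)
  ultimately have "\<bar>cos u - 1 + u\<^sup>2/2\<bar> \<le> \<bar>u\<bar>^4/24" using h by (simp add: fact_numeral)
  moreover have "\<bar>u\<bar>^4 \<le> u\<^sup>2"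
  proof -
    have "\<bar>u\<bar>^4 = u\<^sup>2 * u\<^sup>2" by (simp add: power2_eq_square power4_eq_xxxx)
    also have "\<dots> \<le> u\<^sup>2 * 1" using assms by (intro mult_left_mono) (auto simp: abs_square_le_1)
    finally show ?thesis by simp
  qed
  ultimately show ?thesis by linarith
qed

lemma pow_bound:
  fixes q :: "nat \<Rightarrow> real"
  assumes q: "\<And>n. 0 \<le> q n" "\<And>n. q n \<le> 1" and lim: "(\<lambda>n. q n ^ n) \<longlonglongrightarrow> L" and L: "L > 0"
  shows "\<exists>N C. \<forall>n\<ge>N. real n * (1 - (q n)\<^sup>2) \<le> C"
proof -
  have "eventually (\<lambda>n. q n ^ n > L/2) sequentially"
    using order_tendstoD(1)[OF lim, of "L/2"] L by linarith
  then obtain N where N: "\<And>n. n \<ge> N \<Longrightarrow> q n ^ n > L/2" by (auto simp: eventually_sequentially)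
  have "real n * (1 - (q n)\<^sup>2) \<le> 2 * \<bar>ln (L/2)\<bar>" if n: "n \<ge> N" for n
  proof (cases "n = 0")
    case True then show ?thesis by simp
  next
    case False
    have qn: "q n ^ n > L/2" using N n by auto
    have qpos: "q n > 0"
    proof (rule ccontr)
      assume "\<not> q n > 0" then have "q n = 0" using q(1)[of n] by simp
      then show False using qn L False by (simp add: zero_power)
    qed
    have "ln (L/2) \<le> ln (q n ^ n)" using qn L by (subst ln_le_cancel_iff) auto
    also have "\<dots> = real n * ln (q n)" using qpos by (simp add: ln_realpow)
    finally have a: "ln (L/2) \<le> real n * ln (q n)" .
    have b: "ln (q n) \<le> q n - 1" using qpos by (rule ln_le_minus_one)
    have c: "1 - (q n)\<^sup>2 \<le> 2 * (1 - q n)" proof -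
      have "0 \<le> (1 - q n)\<^sup>2" by simp
      then show ?thesis by (simp add: power2_eq_square algebra_simps)
    qed
    have "real n * (1 - (q n)\<^sup>2) \<le> real n * (2 * (1 - q n))" using c by (intro mult_left_mono) auto
    also have "\<dots> \<le> 2 * (- (real n * ln (q n)))" proof -
      have "real n * (1 - q n) \<le> real n * (- ln (q n))" using b by (intro mult_left_mono) auto
      then show ?thesis by (simp add: algebra_simps)
    qed
    also have "\<dots> \<le> 2 * \<bar>ln (L/2)\<bar>" using a by simp
    finally show ?thesis .
  qed
  then show ?thesis by blast
qed

theorem lemma4:
  fixes \<nu> :: "real measure" and b c :: "nat \<Rightarrow> real" and m \<sigma> :: real
  assumes "real_distribution \<nu>"
    and "\<And>n. b n > 0"
    and "\<sigma> > 0"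
    and "\<And>t. (\<lambda>n. exp (\<i> * complex_of_real (t * c n)) * (char \<nu> (b n * t)) ^ n)
              \<longlonglongrightarrow> exp (complex_of_real (t * m) * \<i> - complex_of_real ((1/2) * \<sigma>\<^sup>2 * t\<^sup>2))"
    and "\<And>n. b n \<ge> 1 / sqrt (real n)"
  shows "(\<integral>\<^sup>+ x. ennreal (x\<^sup>2) \<partial>\<nu>) < \<infinity>"
proof -
  note nu = assms(1)
  interpret real_distribution \<nu> by fact
  have PS: "prob_space (\<nu> \<Otimes>\<^sub>M \<nu>)" by (simp add: prob_space_axioms prob_space_pair)
  interpret S: prob_space "\<nu> \<Otimes>\<^sub>M \<nu>" by (rule PS)
  interpret PP: pair_prob_space \<nu> \<nu> by (simp add: pair_prob_space.intro pair_sigma_finite_def prob_space_axioms prob_space_imp_sigma_finite)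
  define q where "q t n = cmod (char \<nu> (b n * t))" for t n
  have q01: "0 \<le> q t n" "q t n \<le> 1" for t n unfolding q_def by (auto simp: cmod_char_le_1)
  have qlim: "(\<lambda>n. q t n ^ n) \<longlonglongrightarrow> exp (-(1/2)*\<sigma>\<^sup>2*t\<^sup>2)" for t
  proof -
    have "(\<lambda>n. norm (exp (\<i> * complex_of_real (t * c n)) * (char \<nu> (b n * t)) ^ n))
       \<longlonglongrightarrow> norm (exp (complex_of_real (t * m) * \<i> - complex_of_real ((1/2) * \<sigma>\<^sup>2 * t\<^sup>2)))"
      by (rule tendsto_norm[OF assms(4)])
    then show ?thesis unfolding q_def by (simp add: norm_mult norm_power norm_exp_eq_Re)
  qed
  have bnd: "\<exists>N C. \<forall>n\<ge>N. real n * (1 - (q t n)\<^sup>2) \<le> C" for t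
    by (rule pow_bound[OF q01 qlim]) simp
  have rlim: "(\<lambda>n. (q t n)\<^sup>2) \<longlonglongrightarrow> 1" for t
  proof -
    obtain N C where NC: "\<And>n. n \<ge> N \<Longrightarrow> real n * (1 - (q t n)\<^sup>2) \<le> C" using bnd[of t] by blast
    have "(\<lambda>n. 1 - (q t n)\<^sup>2) \<longlonglongrightarrow> 0"
    proof (rule Lim_null_comparison)
      show "(\<lambda>n. C * inverse (real n)) \<longlonglongrightarrow> 0"
        by (intro tendsto_mult_right_zero lim_inverse_n)
      show "\<forall>\<^sub>F n in sequentially. norm (1 - (q t n)\<^sup>2) \<le> C * inverse (real n)"
        unfolding eventually_sequentially
      proof (intro exI allI impI)
        fix n assume n: "max N 1 \<le> n"
        have "0 \<le> 1 - (q t n)\<^sup>2" using q01[of t n] by (simp add: abs_square_le_1)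
        moreover have "real n * (1 - (q t n)\<^sup>2) \<le> C" using NC n by auto
        ultimately show "norm (1 - (q t n)\<^sup>2) \<le> C * inverse (real n)"
          using n by (simp add: field_simps)
      qed
    qed
    then have "(\<lambda>n. 1 - (1 - (q t n)\<^sup>2)) \<longlonglongrightarrow> 1 - 0" by (intro tendsto_intros)
    then show ?thesis by simp
  qed
  have small: "\<exists>n\<ge>N. b n \<le> 1/K" if K: "K > 0" for K N
  proof (rule ccontr)
    assume "\<not> (\<exists>n\<ge>N. b n \<le> 1/K)"
    then have bK: "\<And>n. n \<ge> N \<Longrightarrow> b n > 1/K" by auto
    define M where "M n = distr (\<nu> \<Otimes>\<^sub>M \<nu>) borel (\<lambda>p. b n * (fst p - snd p))" for n
    define M' where "M' = return borel (0::real)"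
    have zm: "(\<lambda>p. b n * (fst p - snd p)) \<in> borel_measurable (\<nu> \<Otimes>\<^sub>M \<nu>)" for n
      by (rule rd_meas2[OF nu]) simp
    have rdM: "real_distribution (M n)" for n
      unfolding M_def by (rule S.real_distribution_distr) (simp add: zm)
    have rdM': "real_distribution M'"
      unfolding M'_def real_distribution_def real_distribution_axioms_def by (auto intro!: prob_space_return)
    have charM: "char (M n) t = complex_of_real ((q t n)\<^sup>2)" for n t
    proof -
      have "char (M n) t = (\<integral>p. iexp (t * (b n * (fst p - snd p))) \<partial>(\<nu> \<Otimes>\<^sub>M \<nu>))"
        unfolding char_def M_def by (rule integral_distr[OF zm]) simp
      also have "\<dots> = (\<integral>p. iexp ((b n * t) * (fst p - snd p)) \<partial>(\<nu> \<Otimes>\<^sub>M \<nu>))"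
        by (simp add: algebra_simps)
      also have "\<dots> = complex_of_real ((q t n)\<^sup>2)" unfolding q_def by (rule cexp_diff[OF nu])
      finally show ?thesis .
    qed
    have charM': "char M' t = 1" for t
      unfolding char_def M'_def by (subst integral_return) auto
    have "weak_conv_m M M'"
    proof (rule levy_continuity[OF rdM rdM'])
      fix t
      have "(\<lambda>n. complex_of_real ((q t n)\<^sup>2)) \<longlonglongrightarrow> complex_of_real 1"
        by (rule tendsto_of_real[OF rlim])
      then show "(\<lambda>n. char (M n) t) \<longlonglongrightarrow> char M' t" by (simp add: charM charM')
    qed
    then have wc: "\<And>x. isCont (cdf M') x \<Longrightarrow> (\<lambda>n. cdf (M n) x) \<longlonglongrightarrow> cdf M' x"
      unfolding weak_conv_m_def weak_conv_def by blast
    have cdfM': "cdf M' x = (if 0 \<le> x then 1 else 0)" for x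
      unfolding cdf_def M'_def by (simp add: measure_return)
    have contM': "isCont (cdf M') x" if "x \<noteq> 0" for x
      using that by (subst finite_borel_measure.isCont_cdf[OF real_distribution.finite_borel_measure_M[OF rdM']]) (simp add: M'_def measure_return)
    have cdfM: "cdf (M n) x = S.prob {p. b n * (fst p - snd p) \<le> x}" for n x
      unfolding cdf_def M_def by (subst measure_distr[OF zm]) (auto intro!: arg_cong[where f="S.prob"] simp: space_pair_measure)
    have prob1: "S.prob {p. \<bar>fst p - snd p\<bar> \<le> e} = 1" if e: "e > 0" for e
    proof -
      define \<eta> where "\<eta> = e / K"
      have eta: "\<eta> > 0" using e K by (simp add: \<eta>_def)
      have l1: "(\<lambda>n. cdf (M n) \<eta>) \<longlonglongrightarrow> 1" using wc[OF contM'[of \<eta>]] eta by (simp add: cdfM')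
      have l2: "(\<lambda>n. cdf (M n) (-\<eta>)) \<longlonglongrightarrow> 0" using wc[OF contM'[of "-\<eta>"]] eta by (simp add: cdfM')
      have "(\<lambda>n. cdf (M n) \<eta> - cdf (M n) (-\<eta>)) \<longlonglongrightarrow> 1 - 0" by (intro tendsto_intros l1 l2)
      then have lim: "(\<lambda>n. cdf (M n) \<eta> - cdf (M n) (-\<eta>)) \<longlonglongrightarrow> 1" by simp
      have le: "cdf (M n) \<eta> - cdf (M n) (-\<eta>) \<le> S.prob {p. \<bar>fst p - snd p\<bar> \<le> e}" if n: "n \<ge> N" for n
      proof -
        have "cdf (M n) \<eta> - cdf (M n) (-\<eta>) = measure (M n) {-\<eta><..\<eta>}"
          by (rule finite_borel_measure.cdf_diff_eq[OF real_distribution.finite_borel_measure_M[OF rdM]]) (use eta in simp)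
        also have "\<dots> = S.prob {p. b n * (fst p - snd p) \<in> {-\<eta><..\<eta>}}"
          unfolding M_def by (subst measure_distr[OF zm]) (auto intro!: arg_cong[where f="S.prob"] simp: space_pair_measure)
        also have "\<dots> \<le> S.prob {p. \<bar>fst p - snd p\<bar> \<le> e}"
        proof (rule S.finite_measure_mono)
          show "{p. \<bar>fst p - snd p\<bar> \<le> e} \<in> S.events"
          proof -
            have "{p \<in> space (borel \<Otimes>\<^sub>M borel). \<bar>fst p - snd p\<bar> \<le> e} \<in> sets (borel \<Otimes>\<^sub>M borel)"
              by measurable
            moreover have "sets (\<nu> \<Otimes>\<^sub>M \<nu>) = sets (borel \<Otimes>\<^sub>M borel)"
              by (rule sets_pair_measure_cong) simp_all
            ultimately show ?thesis by (simp add: space_pair_measure)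
          qed
          show "{p. b n * (fst p - snd p) \<in> {- \<eta><..\<eta>}} \<subseteq> {p. \<bar>fst p - snd p\<bar> \<le> e}"
          proof safe
            fix x y assume "b n * (fst (x, y) - snd (x, y)) \<in> {- \<eta><..\<eta>}"
            then have h: "\<bar>b n * (x - y)\<bar> \<le> \<eta>" by auto
            have bn: "b n > 1/K" using bK n by auto
            have "(1/K) * \<bar>x - y\<bar> \<le> b n * \<bar>x - y\<bar>" using bn by (intro mult_right_mono) auto
            also have "\<dots> \<le> \<eta>" using h assms(2)[of n] by (simp add: abs_mult)
            finally show "\<bar>fst (x, y) - snd (x, y)\<bar> \<le> e" using K by (simp add: \<eta>_def field_simps)
          qed
        qed
        finally show ?thesis .
      qed
      have "1 \<le> S.prob {p. \<bar>fst p - snd p\<bar> \<le> e}"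
        by (rule LIMSEQ_le_const2[OF lim]) (use le in blast)
      then show ?thesis using S.prob_le_1 by (simp add: antisym)
    qed
    have "AE p in \<nu> \<Otimes>\<^sub>M \<nu>. \<forall>k::nat. \<bar>fst p - snd p\<bar> \<le> 1 / Suc k"
    proof (subst AE_all_countable, intro allI)
      fix k :: nat
      show "AE p in \<nu> \<Otimes>\<^sub>M \<nu>. \<bar>fst p - snd p\<bar> \<le> 1 / Suc k"
        using S.AE_prob_1[OF prob1[of "1 / Suc k"]] by simp
    qed
    then have ae: "AE p in \<nu> \<Otimes>\<^sub>M \<nu>. fst p - snd p = 0"
    proof (rule AE_mp, intro AE_I2 impI)
      fix p :: "real \<times> real" assume h: "\<forall>k::nat. \<bar>fst p - snd p\<bar> \<le> 1 / Suc k"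
      show "fst p - snd p = 0"
      proof (rule ccontr)
        assume "fst p - snd p \<noteq> 0"
        then have "\<bar>fst p - snd p\<bar> > 0" by simp
        then obtain k :: nat where "1 / Suc k < \<bar>fst p - snd p\<bar>"
          using nat_approx_posE by blast
        then show False using h by (meson not_le)
      qed
    qed
    have q1: "(q 1 n)\<^sup>2 = 1" for n
    proof -
      have "(q 1 n)\<^sup>2 = (\<integral>p. cos (b n * 1 * (fst p - snd p)) \<partial>(\<nu> \<Otimes>\<^sub>M \<nu>))"
        unfolding q_def by (rule cos_sin_diff(1)[OF nu, symmetric])
      also have "\<dots> = (\<integral>p. 1 \<partial>(\<nu> \<Otimes>\<^sub>M \<nu>))"
        by (rule integral_cong_AE) (use ae in \<open>auto intro!: rd_meas2[OF nu] elim!: AE_mp\<close>)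
      also have "\<dots> = 1" by (simp add: S.prob_space)
      finally show ?thesis .
    qed
    have "q 1 n = 1" for n using q1[of n] q01[of 1 n] by (auto simp: power2_eq_1_iff)
    then have "(\<lambda>n. q 1 n ^ n) \<longlonglongrightarrow> 1" by simp
    with qlim[of 1] have "exp (-(1/2)*\<sigma>\<^sup>2*1\<^sup>2) = 1" by (rule LIMSEQ_unique)
    then show False using assms(3) by simp
  qed
  have fin: "(\<integral>\<^sup>+p. ennreal ((fst p - snd p)\<^sup>2) \<partial>(\<nu> \<Otimes>\<^sub>M \<nu>)) < \<infinity>"
  proof -
    obtain N C where NC: "\<And>n. n \<ge> N \<Longrightarrow> real n * (1 - (q 1 n)\<^sup>2) \<le> C" using bnd[of 1] by blast
    define g where "g k p = ennreal (if \<bar>fst p - snd p\<bar> \<le> real k then (fst p - snd p)\<^sup>2 else 0)" for k :: nat and p :: "real \<times> real"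
    have gmeas: "g k \<in> borel_measurable (\<nu> \<Otimes>\<^sub>M \<nu>)" for k
      unfolding g_def by (rule rd_meas2[OF nu]) simp
    have gbound: "(\<integral>\<^sup>+p. g k p \<partial>(\<nu> \<Otimes>\<^sub>M \<nu>)) \<le> ennreal (4 * C)" for k
    proof -
      have "real k + 1 > 0" by simp
      from small[OF this, of "max N 1"] obtain n where n: "n \<ge> max N 1" "b n \<le> 1 / (real k + 1)" by blast
      define \<beta> where "\<beta> = b n"
      have bpos: "\<beta> > 0" using assms(2) by (simp add: \<beta>_def)
      have bsq: "1 / \<beta>\<^sup>2 \<le> real n"
      proof -
        have "1 / sqrt (real n) \<le> \<beta>" using assms(5) by (simp add: \<beta>_def)
        moreover have "0 \<le> 1 / sqrt (real n)" by simp
        ultimately have "(1 / sqrt (real n))\<^sup>2 \<le> \<beta>\<^sup>2" by (rule power_mono)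
        then have "1 / real n \<le> \<beta>\<^sup>2" by (simp add: power_divide)
        then show ?thesis using n bpos by (simp add: field_simps)
      qed
      have pw: "(if \<bar>z\<bar> \<le> real k then z\<^sup>2 else 0) \<le> 4 * (1 - cos (\<beta> * z)) / \<beta>\<^sup>2" for z
      proof (cases "\<bar>z\<bar> \<le> real k")
        case True
        have "\<bar>\<beta> * z\<bar> \<le> \<beta> * real k" using True bpos by (simp add: abs_mult mult_left_mono)
        also have "\<dots> \<le> (1 / (real k + 1)) * real k" using n(2) by (intro mult_right_mono) (auto simp: \<beta>_def)
        also have "\<dots> = real k / (real k + 1)" by simp
        also have "\<dots> \<le> 1" by simp
        finally have "(\<beta> * z)\<^sup>2 / 4 \<le> 1 - cos (\<beta> * z)" by (rule cos_lb)
        then show ?thesis using True bpos by (simp add: field_simps power_mult_distrib)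
      next
        case False
        then show ?thesis using bpos by simp
      qed
      have cmeas: "(\<lambda>p. 4 * (1 - cos (\<beta> * (fst p - snd p))) / \<beta>\<^sup>2) \<in> borel_measurable (\<nu> \<Otimes>\<^sub>M \<nu>)"
        by (rule rd_meas2[OF nu]) simp
      have cb: "- (4 * cos x) \<le> 4" for x :: real using cos_ge_minus_one[of x] by linarith
      have cint: "integrable (\<nu> \<Otimes>\<^sub>M \<nu>) (\<lambda>p. 4 * (1 - cos (\<beta> * (fst p - snd p))) / \<beta>\<^sup>2)"
        by (rule S.integrable_const_bound[where B="8 / \<beta>\<^sup>2"])
           (use cmeas bpos cb in \<open>auto intro!: AE_I2 divide_right_mono simp: abs_le_iff\<close>)
      have cosint: "integrable (\<nu> \<Otimes>\<^sub>M \<nu>) (\<lambda>p. cos (\<beta> * (fst p - snd p)))"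
        by (rule S.integrable_const_bound[where B=1]) (auto intro!: AE_I2 rd_meas2[OF nu])
      have "(\<integral>\<^sup>+p. g k p \<partial>(\<nu> \<Otimes>\<^sub>M \<nu>)) \<le> (\<integral>\<^sup>+p. ennreal (4 * (1 - cos (\<beta> * (fst p - snd p))) / \<beta>\<^sup>2) \<partial>(\<nu> \<Otimes>\<^sub>M \<nu>))"
        unfolding g_def by (intro nn_integral_mono ennreal_leI pw)
      also have "\<dots> = ennreal (\<integral>p. 4 * (1 - cos (\<beta> * (fst p - snd p))) / \<beta>\<^sup>2 \<partial>(\<nu> \<Otimes>\<^sub>M \<nu>))"
        by (rule nn_integral_eq_integral[OF cint]) (auto intro!: AE_I2 divide_nonneg_nonneg)
      also have "(\<integral>p. 4 * (1 - cos (\<beta> * (fst p - snd p))) / \<beta>\<^sup>2 \<partial>(\<nu> \<Otimes>\<^sub>M \<nu>)) = 4 * ((1 - (q 1 n)\<^sup>2) / \<beta>\<^sup>2)"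
        using cosint cos_sin_diff(1)[OF nu, of \<beta>]
        by (simp add: Bochner_Integration.integral_diff S.prob_space q_def \<beta>_def)
      also have "4 * ((1 - (q 1 n)\<^sup>2) / \<beta>\<^sup>2) \<le> 4 * C"
      proof -
        have nn: "0 \<le> 1 - (q 1 n)\<^sup>2" using q01[of 1 n] by (simp add: abs_square_le_1)
        have "(1 - (q 1 n)\<^sup>2) / \<beta>\<^sup>2 = (1 - (q 1 n)\<^sup>2) * (1 / \<beta>\<^sup>2)" by simp
        also have "\<dots> \<le> (1 - (q 1 n)\<^sup>2) * real n" using bsq nn by (rule mult_left_mono)
        also have "\<dots> \<le> C" using NC[of n] n by (simp add: mult.commute)
        finally show ?thesis by linarith
      qed
      finally show ?thesis by (simp add: ennreal_leI)
    qed
    have inc: "incseq g"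
      by (auto simp: incseq_def le_fun_def g_def intro!: ennreal_leI)
    have sup: "(SUP k. g k p) = ennreal ((fst p - snd p)\<^sup>2)" for p
    proof (rule antisym)
      show "(SUP k. g k p) \<le> ennreal ((fst p - snd p)\<^sup>2)"
        by (rule SUP_least) (auto simp: g_def intro!: ennreal_leI)
      have "g (nat \<lceil>\<bar>fst p - snd p\<bar>\<rceil>) p = ennreal ((fst p - snd p)\<^sup>2)"
        unfolding g_def by (simp add: real_nat_ceiling_ge)
      then show "ennreal ((fst p - snd p)\<^sup>2) \<le> (SUP k. g k p)"
        by (metis UNIV_I SUP_upper)
    qed
    have "(\<integral>\<^sup>+p. ennreal ((fst p - snd p)\<^sup>2) \<partial>(\<nu> \<Otimes>\<^sub>M \<nu>)) = (\<integral>\<^sup>+p. (SUP k. g k p) \<partial>(\<nu> \<Otimes>\<^sub>M \<nu>))"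
      by (simp add: sup)
    also have "\<dots> = (SUP k. \<integral>\<^sup>+p. g k p \<partial>(\<nu> \<Otimes>\<^sub>M \<nu>))"
      by (rule nn_integral_monotone_convergence_SUP[OF inc gmeas])
    also have "\<dots> \<le> ennreal (4 * C)" by (rule SUP_least) (rule gbound)
    also have "\<dots> < \<infinity>" by simp
    finally show ?thesis .
  qed
  have em1: "emeasure \<nu> UNIV = 1" using emeasure_space_1 space_eq_univ by simp
  have meas: "(\<lambda>p. ennreal ((fst p - snd p)\<^sup>2)) \<in> borel_measurable (\<nu> \<Otimes>\<^sub>M \<nu>)"
    by (rule rd_meas2[OF nu]) simp
  have eq: "(\<integral>\<^sup>+x. (\<integral>\<^sup>+y. ennreal ((x - y)\<^sup>2) \<partial>\<nu>) \<partial>\<nu>) = (\<integral>\<^sup>+p. ennreal ((fst p - snd p)\<^sup>2) \<partial>(\<nu> \<Otimes>\<^sub>M \<nu>))"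
    using nn_integral_fst[OF meas] by simp
  have imeas: "(\<lambda>x. \<integral>\<^sup>+y. ennreal ((x - y)\<^sup>2) \<partial>\<nu>) \<in> borel_measurable \<nu>"
    using borel_measurable_nn_integral[of "\<lambda>x y. ennreal ((x - y)\<^sup>2)" \<nu>] meas by simp
  have "AE x in \<nu>. (\<integral>\<^sup>+y. ennreal ((x - y)\<^sup>2) \<partial>\<nu>) \<noteq> \<infinity>"
    by (rule nn_integral_PInf_AE[OF imeas]) (use eq fin in simp)
  then obtain x0 where x0: "(\<integral>\<^sup>+y. ennreal ((x0 - y)\<^sup>2) \<partial>\<nu>) \<noteq> \<infinity>"
  proof -
    assume r: "\<And>x0. (\<integral>\<^sup>+y. ennreal ((x0 - y)\<^sup>2) \<partial>\<nu>) \<noteq> \<infinity> \<Longrightarrow> thesis"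
    assume ae: "AE x in \<nu>. (\<integral>\<^sup>+y. ennreal ((x - y)\<^sup>2) \<partial>\<nu>) \<noteq> \<infinity>"
    show thesis
    proof (rule ccontr)
      assume nt: "\<not> thesis"
      from ae have "AE x in \<nu>. False"
        by eventually_elim (use r nt in blast)
      then show False by auto
    qed
  qed
  have "(\<integral>\<^sup>+ x. ennreal (x\<^sup>2) \<partial>\<nu>) \<le> (\<integral>\<^sup>+ y. 2 * ennreal ((x0 - y)\<^sup>2) + ennreal (2 * x0\<^sup>2) \<partial>\<nu>)"
  proof (rule nn_integral_mono)
    fix y
    have "y\<^sup>2 \<le> 2 * (x0 - y)\<^sup>2 + 2 * x0\<^sup>2"
    proof -
      have "0 \<le> (2*x0 - y)\<^sup>2" by simp
      then show ?thesis by (simp add: power2_eq_square algebra_simps)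
    qed
    then have "ennreal (y\<^sup>2) \<le> ennreal (2 * (x0 - y)\<^sup>2 + 2 * x0\<^sup>2)" by (rule ennreal_leI)
    also have "\<dots> = ennreal (2 * (x0 - y)\<^sup>2) + ennreal (2 * x0\<^sup>2)" by (rule ennreal_plus) auto
    also have "ennreal (2 * (x0 - y)\<^sup>2) = 2 * ennreal ((x0 - y)\<^sup>2)" by (simp add: ennreal_mult)
    finally show "ennreal (y\<^sup>2) \<le> 2 * ennreal ((x0 - y)\<^sup>2) + ennreal (2 * x0\<^sup>2)" .
  qed
  also have "\<dots> = 2 * (\<integral>\<^sup>+y. ennreal ((x0 - y)\<^sup>2) \<partial>\<nu>) + ennreal (2 * x0\<^sup>2)"
    by (subst nn_integral_add) (auto simp: nn_integral_cmult intro!: rd_meas[OF nu] simp: em1)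
  also have "\<dots> < \<infinity>" using x0 by (simp add: less_top ennreal_mult_less_top)
  finally show ?thesis .
qed

end
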